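(* Suppose the e-values are valid, i.e. $\mathbb{E}[e_t\mid\mathcal{F}_{t-1}]\le1$ a.s. whenever $\theta_t=0$, and let $(\lambda_t)_{t\ge1}$ be a sequence of random variables with values in $(0,1)$ such that each $\lambda_t$ is $\mathcal{F}_{t-1}$-measurable. Define $$\widehat{\mathrm{FDP}}^{\mathrm{SAFFRON}}_{\mathrm{e}}(t)=\sum_{j=1}^t\frac{\alpha_j}{R_{j-1}+1}\cdot\frac{\mathbb{1}\{e_j<1/\lambda_j\}}{1-\lambda_j},\qquad \mathrm{FDP}^*_{\mathrm{e}}(t)=\sum_{j\in\mathcal{H}_0(t)}\frac{\alpha_j}{R_{j-1}+1}.$$ Then (a) $\mathbb{E}[\widehat{\mathrm{FDP}}^{\mathrm{SAFFRON}}_{\mathrm{e}}(t)]\ge\mathbb{E}[\mathrm{FDP}^*_{\mathrm{e}}(t)]$ for all $t\ge1$; and (b) if the $\mathcal{F}_{t-1}$-measurable testing levels satisfy $\widehat{\mathrm{FDP}}^{\mathrm{SAFFRON}}_{\mathrm{e}}(t)\le\alpha$ almost surely for every $t\ge1$, then $\mathrm{FDR}(t)\le\alpha$ for all $t\ge1$.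
   Context: Let $\alpha\in(0,1)$ be a target level. Hypotheses are indexed by $t=1,2,\dots$; $\theta_t\in\{0,1\}$ is a fixed (non-random) indicator with $\theta_t=0$ iff the $t$-th null hypothesis is true. $e_1,e_2,\dots$ are nonnegative random variables (e-values). Testing levels $\alpha_1,\alpha_2,\dots$ are nonnegative random variables and the decisions are $\delta_t=\mathbb{1}\{e_t\ge 1/\alpha_t\}$ (with $\delta_t=0$ when $\alpha_t=0$). Let $\mathcal{F}_t=\sigma(\delta_1,\dots,\delta_t)$, $\mathcal{F}_0$ trivial; each $\alpha_t$ is required to be $\mathcal{F}_{t-1}$-measurable. $R_t=\sum_{j=1}^t\delta_j$, $R_0=0$. $\mathcal{H}_0(t)=\{j\le t:\theta_j=0\}$. $\mathrm{FDR}(t)=\mathbb{E}\big[\sum_{j\in\mathcal{H}_0(t)}\delta_j/(R_t\vee 1)\big]$. *)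

theory Defs
  imports "HOL-Probability.Probability"
begin

text \<open>Hypotheses are indexed by t = 1,2,...; values at index 0 are irrelevant.
  e t : e-value, lev t : testing level alpha_t, both random variables on M.\<close>

definition decision :: "(nat \<Rightarrow> 'a \<Rightarrow> real) \<Rightarrow> (nat \<Rightarrow> 'a \<Rightarrow> real) \<Rightarrow> nat \<Rightarrow> 'a \<Rightarrow> real" where
  "decision e lev t x = (if lev t x \<noteq> 0 \<and> e t x \<ge> 1 / lev t x then 1 else 0)"

definition rejections :: "(nat \<Rightarrow> 'a \<Rightarrow> real) \<Rightarrow> (nat \<Rightarrow> 'a \<Rightarrow> real) \<Rightarrow> nat \<Rightarrow> 'a \<Rightarrow> real" where
  "rejections e lev t x = (\<Sum>j\<in>{1..t}. decision e lev j x)"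

text \<open>Filtration F_t = sigma(delta_1, ..., delta_t); F_0 is trivial. Since each delta_j is
  0/1-valued, sigma(delta_j) is generated by the event {delta_j = 1}.\<close>
definition filt :: "'a measure \<Rightarrow> (nat \<Rightarrow> 'a \<Rightarrow> real) \<Rightarrow> (nat \<Rightarrow> 'a \<Rightarrow> real) \<Rightarrow> nat \<Rightarrow> 'a measure" where
  "filt M e lev t = sigma (space M)
     {{x \<in> space M. decision e lev j x = 1} | j. j \<in> {1..t}}"

definition nulls :: "(nat \<Rightarrow> nat) \<Rightarrow> nat \<Rightarrow> nat set" where
  "nulls \<theta> t = {j \<in> {1..t}. \<theta> j = 0}"

definition FDP :: "(nat \<Rightarrow> nat) \<Rightarrow> (nat \<Rightarrow> 'a \<Rightarrow> real) \<Rightarrow> (nat \<Rightarrow> 'a \<Rightarrow> real) \<Rightarrow> nat \<Rightarrow> 'a \<Rightarrow> real" where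
  "FDP \<theta> e lev t x = (\<Sum>j\<in>nulls \<theta> t. decision e lev j x) / max (rejections e lev t x) 1"

definition FDR :: "'a measure \<Rightarrow> (nat \<Rightarrow> nat) \<Rightarrow> (nat \<Rightarrow> 'a \<Rightarrow> real) \<Rightarrow> (nat \<Rightarrow> 'a \<Rightarrow> real) \<Rightarrow> nat \<Rightarrow> real" where
  "FDR M \<theta> e lev t = prob_space.expectation M (FDP \<theta> e lev t)"

definition FDP_hat_saffron :: "(nat \<Rightarrow> 'a \<Rightarrow> real) \<Rightarrow> (nat \<Rightarrow> 'a \<Rightarrow> real) \<Rightarrow> (nat \<Rightarrow> 'a \<Rightarrow> real) \<Rightarrow> nat \<Rightarrow> 'a \<Rightarrow> real" where
  "FDP_hat_saffron e lev lam t x =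
     (\<Sum>j\<in>{1..t}. lev j x / (rejections e lev (j - 1) x + 1)
        * (if e j x < 1 / lam j x then 1 else 0) / (1 - lam j x))"

definition FDP_star :: "(nat \<Rightarrow> nat) \<Rightarrow> (nat \<Rightarrow> 'a \<Rightarrow> real) \<Rightarrow> (nat \<Rightarrow> 'a \<Rightarrow> real) \<Rightarrow> nat \<Rightarrow> 'a \<Rightarrow> real" where
  "FDP_star \<theta> e lev t x = (\<Sum>j\<in>nulls \<theta> t. lev j x / (rejections e lev (j - 1) x + 1))"

end

theory Submission
  imports Defs
begin

lemma decision_01: "decision e lev j x = 0 \<or> decision e lev j x = 1"
  by (simp add: decision_def)

lemma space_filt[simp]: "space (filt M e lev n) = space M"
  unfolding filt_def by (simp add: space_measure_of_conv)

lemma sets_filt: "sets (filt M e lev n) = sigma_sets (space M) {{x \<in> space M. decision e lev j x = 1} | j. j \<in> {1..n}}"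
  unfolding filt_def by (rule sets_measure_of) auto

lemma dec_meas_gen:
  fixes f g :: "'a \<Rightarrow> real"
  assumes "f \<in> borel_measurable M" "g \<in> borel_measurable M"
  shows "(\<lambda>x. if g x \<noteq> 0 \<and> f x \<ge> 1 / g x then 1 else (0::real)) \<in> borel_measurable M"
proof -
  have a: "{x \<in> space M. 1 / g x \<le> f x} \<in> sets M"
    using borel_measurable_le[of "\<lambda>x. 1 / g x" M f] borel_measurable_divide[of "\<lambda>_. 1" M g] assms by auto
  have b: "{x \<in> space M. g x \<noteq> 0} \<in> sets M"
  proof -
    have "{x \<in> space M. g x = 0} \<in> sets M" using borel_measurable_eq[of g M "\<lambda>_. 0"] assms by simp
    then have "space M - {x \<in> space M. g x = 0} \<in> sets M" by (rule sets.compl_sets)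
    moreover have "space M - {x \<in> space M. g x = 0} = {x \<in> space M. g x \<noteq> 0}" by blast
    ultimately show ?thesis by simp
  qed
  have "{x \<in> space M. g x \<noteq> 0 \<and> 1 / g x \<le> f x} = {x \<in> space M. g x \<noteq> 0} \<inter> {x \<in> space M. 1 / g x \<le> f x}" by auto
  then have "{x \<in> space M. g x \<noteq> 0 \<and> 1 / g x \<le> f x} \<in> sets M" using a b by auto
  then show ?thesis by (intro measurable_If measurable_const) simp_all
qed

lemma meas_cong_ind:
  assumes eq: "\<And>x. x \<in> space N \<Longrightarrow> (f::'a\<Rightarrow>real) x = indicator S x"
    and ind: "(indicator S :: 'a \<Rightarrow> real) \<in> borel_measurable N"
  shows "f \<in> borel_measurable N"
proof -
  have "f \<in> borel_measurable N \<longleftrightarrow> (indicator S :: 'a \<Rightarrow> real) \<in> borel_measurable N"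
    by (intro measurable_cong_simp refl eq)
  then show ?thesis using ind by blast
qed

context
  fixes M :: "'a measure" and e lev :: "nat \<Rightarrow> 'a \<Rightarrow> real"
  assumes emeas: "\<And>t. t \<ge> 1 \<Longrightarrow> e t \<in> borel_measurable M"
    and levmeas: "\<And>t. t \<ge> 1 \<Longrightarrow> lev t \<in> borel_measurable (filt M e lev (t - 1))"
begin

lemma subalg_of_dec:
  assumes "\<And>j. j \<in> {1..n} \<Longrightarrow> decision e lev j \<in> borel_measurable M"
  shows "subalgebra M (filt M e lev n)"
proof -
  have "{{x \<in> space M. decision e lev j x = 1} | j. j \<in> {1..n}} \<subseteq> sets M"
  proof -
    have "{x \<in> space M. decision e lev j x = 1} \<in> sets M" if j: "j \<in> {1..n}" for j
    proof -
      have "decision e lev j \<in> borel_measurable M" using assms j by blast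
      then have "decision e lev j -` {1} \<inter> space M \<in> sets M" by (rule measurable_sets) simp
      moreover have "decision e lev j -` {1} \<inter> space M = {x \<in> space M. decision e lev j x = 1}" by blast
      ultimately show ?thesis by simp
    qed
    then show ?thesis by blast
  qed
  then show ?thesis unfolding subalgebra_def sets_filt
    by (simp add: sets.sigma_sets_subset)
qed

lemma dec_meas_all: "\<forall>j\<in>{1..n}. decision e lev j \<in> borel_measurable M"
proof (induction n)
  case 0 then show ?case by simp
next
  case (Suc n)
  have sub: "subalgebra M (filt M e lev n)" using Suc subalg_of_dec by blast
  have "lev (Suc n) \<in> borel_measurable M"
    using measurable_from_subalg[OF sub] levmeas[of "Suc n"] by simp
  moreover have "e (Suc n) \<in> borel_measurable M" using emeas by simp
  ultimately have "decision e lev (Suc n) \<in> borel_measurable M"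
    unfolding decision_def[abs_def] by (rule dec_meas_gen[rotated])
  then show ?case using Suc by (auto simp: le_Suc_eq)
qed

lemma dec_meas: "j \<ge> 1 \<Longrightarrow> decision e lev j \<in> borel_measurable M"
  using dec_meas_all[of j] by auto

lemma subalg: "subalgebra M (filt M e lev n)"
  using subalg_of_dec dec_meas by auto

lemma dec_meas_filt:
  assumes "1 \<le> j" "j \<le> k"
  shows "decision e lev j \<in> borel_measurable (filt M e lev k)"
proof -
  let ?S = "{x \<in> space M. decision e lev j x = 1}"
  have "?S \<in> {{x \<in> space M. decision e lev j x = 1} | j. j \<in> {1..k}}"
    by (rule CollectI, rule exI[of _ j]) (use assms in simp)
  then have "?S \<in> sets (filt M e lev k)" unfolding sets_filt
    by (rule sigma_sets.Basic)
  then have ind: "(indicator ?S :: 'a \<Rightarrow> real) \<in> borel_measurable (filt M e lev k)" by (rule borel_measurable_indicator)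
  have eq: "\<And>x. x \<in> space (filt M e lev k) \<Longrightarrow> decision e lev j x = indicator ?S x"
    by (simp add: indicator_def decision_def)
  show ?thesis by (rule meas_cong_ind[OF eq ind])
qed

lemma rej_meas_filt: "rejections e lev k \<in> borel_measurable (filt M e lev k)"
  unfolding rejections_def[abs_def]
  by (rule borel_measurable_sum, rule dec_meas_filt) auto

end

lemma ennreal_aux: "(a::ennreal) + b = 1 \<Longrightarrow> b \<le> ennreal l \<Longrightarrow> 0 \<le> l \<Longrightarrow> l \<le> 1 \<Longrightarrow> ennreal (1 - l) \<le> a"
  by (smt (verit, del_insts) add.commute add.right_neutral
    add_diff_eq_iff_ennreal diff_add_eq_diff_diff_swap_ennreal ennreal_0
    ennreal_1 ennreal_le_iff ennreal_le_minus_iff ennreal_minus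
    ennreal_minus_if ennreal_mono_minus)

lemma dec_nonneg: "0 \<le> decision e lev k x"
  by (simp add: decision_def)

lemma rej_nonneg: "0 \<le> rejections e lev k x"
  unfolding rejections_def by (intro sum_nonneg dec_nonneg)

lemma pred_lt_div: "f \<in> borel_measurable M \<Longrightarrow> g \<in> borel_measurable M \<Longrightarrow> Measurable.pred M (\<lambda>x. f x < 1 / (g x::real))"
  unfolding pred_def using borel_measurable_less[of f M "\<lambda>x. 1 / g x"] borel_measurable_divide[of "\<lambda>_. 1" M g]
  by auto

lemma meas_enn: "f \<in> borel_measurable M \<Longrightarrow> (\<lambda>x. ennreal (f x :: real)) \<in> borel_measurable M"
  using measurable_compose[OF _ measurable_ennreal] .
lemma meas_ratio: fixes a r :: "'a \<Rightarrow> real"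
  shows "a \<in> borel_measurable M \<Longrightarrow> r \<in> borel_measurable M \<Longrightarrow> (\<lambda>x. a x / (r x + 1)) \<in> borel_measurable M"
  by (intro borel_measurable_divide borel_measurable_add borel_measurable_const)
lemma meas_g: fixes a r l :: "'a \<Rightarrow> real"
  shows "a \<in> borel_measurable M \<Longrightarrow> r \<in> borel_measurable M \<Longrightarrow> l \<in> borel_measurable M \<Longrightarrow>
   (\<lambda>x. a x / (r x + 1) / (1 - l x)) \<in> borel_measurable M"
  by (intro borel_measurable_divide borel_measurable_diff borel_measurable_const meas_ratio)
lemma set_lt_div: fixes f g :: "'a \<Rightarrow> real"
  shows "f \<in> borel_measurable M \<Longrightarrow> g \<in> borel_measurable M \<Longrightarrow> {x \<in> space M. f x < 1 / g x} \<in> sets M"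
  using borel_measurable_less[of f M "\<lambda>x. 1 / g x"] borel_measurable_divide[of "\<lambda>_. 1" M g] by auto
lemma meas_ind: fixes f g :: "'a \<Rightarrow> real"
  shows "f \<in> borel_measurable M \<Longrightarrow> g \<in> borel_measurable M \<Longrightarrow> (\<lambda>x. if f x < 1 / g x then a else (b::real)) \<in> borel_measurable M"
  by (intro measurable_If measurable_const set_lt_div) simp_all
lemma meas_tm: fixes a r f l :: "'a \<Rightarrow> real"
  shows "a \<in> borel_measurable M \<Longrightarrow> r \<in> borel_measurable M \<Longrightarrow> f \<in> borel_measurable M \<Longrightarrow> l \<in> borel_measurable M \<Longrightarrow>
   (\<lambda>x. a x / (r x + 1) * (if f x < 1 / l x then 1 else 0) / (1 - l x)) \<in> borel_measurable M"
  by (intro borel_measurable_divide borel_measurable_times borel_measurable_diff borel_measurable_const meas_ratio meas_ind)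
lemma meas_le: fixes l e :: "'a \<Rightarrow> real"
  shows "l \<in> borel_measurable M \<Longrightarrow> e \<in> borel_measurable M \<Longrightarrow> (\<lambda>x. ennreal (l x) * ennreal (e x)) \<in> borel_measurable M"
  by (intro borel_measurable_times_ennreal meas_enn)
lemma meas_fdp: fixes s R :: "'a \<Rightarrow> real"
  shows "s \<in> borel_measurable M \<Longrightarrow> R \<in> borel_measurable M \<Longrightarrow> (\<lambda>x. s x / max (R x) 1) \<in> borel_measurable M"
  by (intro borel_measurable_divide borel_measurable_max borel_measurable_const)

context
  fixes M :: "'a measure" and e lev lam :: "nat \<Rightarrow> 'a \<Rightarrow> real" and j :: nat
  assumes P: "prob_space M"
    and emeas: "\<And>t. t \<ge> 1 \<Longrightarrow> e t \<in> borel_measurable M"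
    and epos: "\<And>t x. t \<ge> 1 \<Longrightarrow> x \<in> space M \<Longrightarrow> 0 \<le> e t x"
    and levmeas: "\<And>t. t \<ge> 1 \<Longrightarrow> lev t \<in> borel_measurable (filt M e lev (t - 1))"
    and levpos: "\<And>t x. t \<ge> 1 \<Longrightarrow> x \<in> space M \<Longrightarrow> 0 \<le> lev t x"
    and lammeas: "\<And>t. t \<ge> 1 \<Longrightarrow> lam t \<in> borel_measurable (filt M e lev (t - 1))"
    and lampos: "\<And>t x. t \<ge> 1 \<Longrightarrow> x \<in> space M \<Longrightarrow> 0 < lam t x \<and> lam t x < 1"
    and j1: "j \<ge> 1"
    and valid: "AE x in M. nn_cond_exp M (filt M e lev (j - 1)) (\<lambda>y. ennreal (e j y)) x \<le> 1"
begin

abbreviation "F \<equiv> filt M e lev (j - 1)"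

lemma sfs: "sigma_finite_subalgebra M F"
proof -
  interpret prob_space M by (rule P)
  have "finite_measure_subalgebra M F"
    unfolding finite_measure_subalgebra_def finite_measure_subalgebra_axioms_def
    using subalg[OF emeas levmeas] by (simp add: finite_measure_axioms)
  then show ?thesis by (rule finite_measure_subalgebra_is_sigma_finite)
qed

interpretation sigma_finite_subalgebra M F by (rule sfs)

lemma subF: "subalgebra M F" by (rule subalg)

lemma measF[measurable]:
  "lev j \<in> borel_measurable F" "lam j \<in> borel_measurable F" "rejections e lev (j - 1) \<in> borel_measurable F"
  using levmeas[OF j1] lammeas[OF j1] rej_meas_filt[OF emeas levmeas] by auto

lemma measM[measurable]:
  "lev j \<in> borel_measurable M" "lam j \<in> borel_measurable M" "rejections e lev (j - 1) \<in> borel_measurable M"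
  "e j \<in> borel_measurable M" "decision e lev j \<in> borel_measurable M"
  subgoal by (rule measurable_from_subalg[OF subF measF(1)])
  subgoal by (rule measurable_from_subalg[OF subF measF(2)])
  subgoal by (rule measurable_from_subalg[OF subF measF(3)])
  subgoal by (rule emeas[OF j1])
  subgoal by (rule dec_meas[OF emeas levmeas j1])
  done


lemma boundA:
  "(\<integral>\<^sup>+ x. ennreal (decision e lev j x / (rejections e lev (j - 1) x + 1)) \<partial>M)
   \<le> (\<integral>\<^sup>+ x. ennreal (lev j x / (rejections e lev (j - 1) x + 1)) \<partial>M)"
proof -
  let ?h = "\<lambda>x. ennreal (lev j x / (rejections e lev (j - 1) x + 1))"
  have "(\<integral>\<^sup>+ x. ennreal (decision e lev j x / (rejections e lev (j - 1) x + 1)) \<partial>M)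
      \<le> (\<integral>\<^sup>+ x. ?h x * ennreal (e j x) \<partial>M)"
  proof (rule nn_integral_mono)
    fix x assume x: "x \<in> space M"
    have R: "0 \<le> rejections e lev (j - 1) x" by (rule rej_nonneg)
    have "decision e lev j x \<le> lev j x * e j x"
    proof (cases "lev j x \<noteq> 0 \<and> e j x \<ge> 1 / lev j x")
      case True
      then have "lev j x > 0" using levpos[OF j1 x] by auto
      then have "lev j x * e j x \<ge> lev j x * (1 / lev j x)" using True by (intro mult_left_mono) auto
      then show ?thesis using True \<open>lev j x > 0\<close> by (simp add: decision_def)
    next
      case False
      then have "decision e lev j x = 0" by (simp add: decision_def)
      then show ?thesis using levpos[OF j1 x] epos[OF j1 x] by simp
    qed
    then have "decision e lev j x / (rejections e lev (j - 1) x + 1)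
        \<le> lev j x / (rejections e lev (j - 1) x + 1) * e j x"
      using divide_right_mono[OF \<open>decision e lev j x \<le> lev j x * e j x\<close>, of "rejections e lev (j - 1) x + 1"] R
      by (simp add: mult.commute mult.left_commute)
    then show "ennreal (decision e lev j x / (rejections e lev (j - 1) x + 1)) \<le> ?h x * ennreal (e j x)"
      using R levpos[OF j1 x] by (simp add: ennreal_mult'[symmetric] ennreal_leI)
  qed
  also have "\<dots> = (\<integral>\<^sup>+ x. ?h x * nn_cond_exp M F (\<lambda>y. ennreal (e j y)) x \<partial>M)"
    by (rule nn_cond_exp_intg[symmetric]) measurable
  also have "\<dots> \<le> (\<integral>\<^sup>+ x. ?h x * 1 \<partial>M)"
  proof (rule nn_integral_mono_AE)
    show "AE x in M. ?h x * nn_cond_exp M F (\<lambda>y. ennreal (e j y)) x \<le> ?h x * 1"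
      using valid by eventually_elim (rule mult_left_mono, simp_all)
  qed
  finally show ?thesis by simp
qed


lemma boundB:
  "(\<integral>\<^sup>+ x. ennreal (lev j x / (rejections e lev (j - 1) x + 1)) \<partial>M)
   \<le> (\<integral>\<^sup>+ x. ennreal (lev j x / (rejections e lev (j - 1) x + 1)
        * (if e j x < 1 / lam j x then 1 else 0) / (1 - lam j x)) \<partial>M)"
proof -
  let ?h = "\<lambda>x. lev j x / (rejections e lev (j - 1) x + 1)"
  let ?g = "\<lambda>x. ennreal (?h x / (1 - lam j x))"
  let ?I = "\<lambda>x. ennreal (if e j x < 1 / lam j x then 1 else 0)"
  let ?J = "\<lambda>x. ennreal (if e j x < 1 / lam j x then 0 else 1)"
  have gF[measurable]: "?g \<in> borel_measurable F" by (rule meas_enn[OF meas_g[OF measF(1) measF(3) measF(2)]])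
  have IM[measurable]: "?I \<in> borel_measurable M" "?J \<in> borel_measurable M"
    by (rule meas_enn[OF meas_ind[OF measM(4) measM(2)]])+
  have "AE x in M. nn_cond_exp M F ?I x + nn_cond_exp M F ?J x = nn_cond_exp M F (\<lambda>x. ?I x + ?J x) x"
    by (rule nn_cond_exp_sum) measurable
  moreover have "(\<lambda>x. ?I x + ?J x) = (\<lambda>x. 1)" by (auto simp: fun_eq_iff)
  ultimately have s1: "AE x in M. nn_cond_exp M F ?I x + nn_cond_exp M F ?J x = nn_cond_exp M F (\<lambda>x. 1) x"
    by simp
  moreover have "AE x in M. (\<lambda>x. 1::ennreal) x = nn_cond_exp M F (\<lambda>x. 1) x"
    by (rule nn_cond_exp_F_meas) measurable
  moreover have "AE x in M. nn_cond_exp M F ?J x \<le> nn_cond_exp M F (\<lambda>x. ennreal (lam j x) * ennreal (e j x)) x"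
  proof (rule nn_cond_exp_mono)
    show "AE x in M. ?J x \<le> ennreal (lam j x) * ennreal (e j x)"
    proof (rule AE_I2)
      fix x assume x: "x \<in> space M"
      have l: "0 < lam j x" using lampos[OF j1 x] by auto
      have "(if e j x < 1 / lam j x then 0 else 1) \<le> lam j x * e j x"
      proof (cases "e j x < 1 / lam j x")
        case False
        then have "lam j x * e j x \<ge> lam j x * (1 / lam j x)" using l by (intro mult_left_mono) auto
        then show ?thesis using False l by simp
      qed (use l epos[OF j1 x] in auto)
      then show "?J x \<le> ennreal (lam j x) * ennreal (e j x)"
        using l epos[OF j1 x] by (simp add: ennreal_mult'[symmetric] ennreal_leI)
    qed
  qed (rule IM(2), rule meas_le[OF measM(2) measM(4)])
  moreover have "AE x in M. ennreal (lam j x) * nn_cond_exp M F (\<lambda>y. ennreal (e j y)) x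
      = nn_cond_exp M F (\<lambda>x. ennreal (lam j x) * ennreal (e j x)) x"
    by (rule nn_cond_exp_prod) measurable
  ultimately have AEc: "AE x in M. ennreal (1 - lam j x) \<le> nn_cond_exp M F ?I x"
    using valid AE_space
  proof eventually_elim
    case (elim x)
    have "nn_cond_exp M F ?J x \<le> nn_cond_exp M F (\<lambda>x. ennreal (lam j x) * ennreal (e j x)) x"
      by (rule elim(3))
    also have "\<dots> = ennreal (lam j x) * nn_cond_exp M F (\<lambda>y. ennreal (e j y)) x"
      by (rule elim(4)[symmetric])
    also have "\<dots> \<le> ennreal (lam j x) * 1"
      by (rule mult_left_mono[OF elim(5)]) simp
    finally have "nn_cond_exp M F ?J x \<le> ennreal (lam j x) * 1" .
    moreover have "nn_cond_exp M F ?I x + nn_cond_exp M F ?J x = 1"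
      by (subst elim(1)) (rule elim(2)[symmetric])
    ultimately show ?case using ennreal_aux[of "nn_cond_exp M F ?I x" "nn_cond_exp M F ?J x" "lam j x"]
      using lampos[OF j1 elim(6)] by simp
  qed
  have "(\<integral>\<^sup>+ x. ennreal (?h x) \<partial>M) \<le> (\<integral>\<^sup>+ x. ?g x * nn_cond_exp M F ?I x \<partial>M)"
  proof (rule nn_integral_mono_AE)
    show "AE x in M. ennreal (?h x) \<le> ?g x * nn_cond_exp M F ?I x"
      using AEc AE_space
    proof eventually_elim
      case (elim x)
      have l: "0 < 1 - lam j x" using lampos[OF j1 elim(2)] by auto
      have h: "0 \<le> ?h x" using levpos[OF j1 elim(2)] rej_nonneg[of e lev "j - 1" x] by simp
      have "?h x / (1 - lam j x) * (1 - lam j x) = ?h x" using l by simp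
      then have "ennreal (?h x) = ennreal (?h x / (1 - lam j x) * (1 - lam j x))" by simp
      also have "\<dots> = ?g x * ennreal (1 - lam j x)"
        by (rule ennreal_mult''[of "1 - lam j x"]) (use l in simp)
      also have "\<dots> \<le> ?g x * nn_cond_exp M F ?I x" using elim(1) by (rule mult_left_mono) simp
      finally show ?case .
    qed
  qed
  also have "\<dots> = (\<integral>\<^sup>+ x. ?g x * ?I x \<partial>M)"
    by (rule nn_cond_exp_intg) measurable
  also have "\<dots> = (\<integral>\<^sup>+ x. ennreal (?h x * (if e j x < 1 / lam j x then 1 else 0) / (1 - lam j x)) \<partial>M)"
  proof (rule nn_integral_cong)
    fix x assume x: "x \<in> space M"
    have l: "0 < 1 - lam j x" using lampos[OF j1 x] by auto
    have h: "0 \<le> ?h x" using levpos[OF j1 x] rej_nonneg[of e lev "j - 1" x] by simp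
    show "?g x * ?I x = ennreal (?h x * (if e j x < 1 / lam j x then 1 else 0) / (1 - lam j x))"
      using l h by (simp add: ennreal_mult'[symmetric])
  qed
  finally show ?thesis .
qed

end

lemma rej_Suc: "rejections e lev (Suc k) x = rejections e lev k x + decision e lev (Suc k) x"
  unfolding rejections_def by simp

lemma rej_mono: "k \<le> t \<Longrightarrow> rejections e lev k x \<le> rejections e lev t x"
  unfolding rejections_def by (rule sum_mono2) (auto simp: dec_nonneg)

lemma FDP_le: "FDP \<theta> e lev t x \<le> (\<Sum>j\<in>nulls \<theta> t. decision e lev j x / (rejections e lev (j - 1) x + 1))"
  unfolding FDP_def sum_divide_distrib
proof (rule sum_mono)
  fix j assume j: "j \<in> nulls \<theta> t"
  then have j1: "1 \<le> j" "j \<le> t" by (auto simp: nulls_def)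
  show "decision e lev j x / max (rejections e lev t x) 1 \<le> decision e lev j x / (rejections e lev (j - 1) x + 1)"
  proof (cases "decision e lev j x = 1")
    case True
    have "rejections e lev j x = rejections e lev (j - 1) x + 1"
      using rej_Suc[of e lev "j - 1" x] j1 True by simp
    then have "rejections e lev (j - 1) x + 1 \<le> max (rejections e lev t x) 1"
      using rej_mono[OF j1(2), of e lev x] by simp
    then show ?thesis using True rej_nonneg[of e lev "j - 1" x]
      by (simp add: frac_le)
  next
    case False
    then have "decision e lev j x = 0" using decision_01 by metis
    then show ?thesis by simp
  qed
qed

theorem proposition2:
  fixes M :: "'a measure"
    and alpha :: real
    and \<theta> :: "nat \<Rightarrow> nat"
    and e lev lam :: "nat \<Rightarrow> 'a \<Rightarrow> real"
  assumes "prob_space M"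
    and "0 < alpha" and "alpha < 1"
    and "\<And>t. t \<ge> 1 \<Longrightarrow> \<theta> t \<in> {0, 1}"
    and "\<And>t. t \<ge> 1 \<Longrightarrow> e t \<in> borel_measurable M"
    and "\<And>t x. t \<ge> 1 \<Longrightarrow> x \<in> space M \<Longrightarrow> 0 \<le> e t x"
    and "\<And>t. t \<ge> 1 \<Longrightarrow> lev t \<in> borel_measurable (filt M e lev (t - 1))"
    and "\<And>t x. t \<ge> 1 \<Longrightarrow> x \<in> space M \<Longrightarrow> 0 \<le> lev t x"
    and "\<And>t. t \<ge> 1 \<Longrightarrow> \<theta> t = 0 \<Longrightarrow>
           AE x in M. nn_cond_exp M (filt M e lev (t - 1)) (\<lambda>y. ennreal (e t y)) x \<le> 1"
    and "\<And>t. t \<ge> 1 \<Longrightarrow> lam t \<in> borel_measurable (filt M e lev (t - 1))"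
    and "\<And>t x. t \<ge> 1 \<Longrightarrow> x \<in> space M \<Longrightarrow> 0 < lam t x \<and> lam t x < 1"
  shows "(\<forall>t\<ge>1. (\<integral>\<^sup>+ x. ennreal (FDP_hat_saffron e lev lam t x) \<partial>M)
                   \<ge> (\<integral>\<^sup>+ x. ennreal (FDP_star \<theta> e lev t x) \<partial>M))
       \<and> ((\<forall>t\<ge>1. AE x in M. FDP_hat_saffron e lev lam t x \<le> alpha)
            \<longrightarrow> (\<forall>t\<ge>1. FDR M \<theta> e lev t \<le> alpha))"
proof -
  note P = assms(1)
  note emeas = assms(5) and epos = assms(6) and levmeas = assms(7) and levpos = assms(8)
    and valid = assms(9) and lammeas = assms(10) and lampos = assms(11)
  interpret prob_space M by (rule P)
  define h where "h j x = lev j x / (rejections e lev (j - 1) x + 1)" for j x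
  define tm where "tm j x = lev j x / (rejections e lev (j - 1) x + 1)
        * (if e j x < 1 / lam j x then 1 else 0) / (1 - lam j x)" for j x
  have hnn: "0 \<le> h j x" if "j \<ge> 1" "x \<in> space M" for j x
    using levpos[OF that] rej_nonneg[of e lev "j - 1" x] unfolding h_def by simp
  have tnn: "0 \<le> tm j x" if "j \<ge> 1" "x \<in> space M" for j x
    using levpos[OF that] rej_nonneg[of e lev "j - 1" x] lampos[OF that] unfolding tm_def by simp
  have LM: "lev j \<in> borel_measurable M" "lam j \<in> borel_measurable M"
    "rejections e lev (j - 1) \<in> borel_measurable M"
    "e j \<in> borel_measurable M" "decision e lev j \<in> borel_measurable M" if "j \<ge> 1" for j
    subgoal by (rule measurable_from_subalg[OF subalg[OF emeas levmeas] levmeas[OF that]])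
    subgoal by (rule measurable_from_subalg[OF subalg[OF emeas levmeas] lammeas[OF that]])
    subgoal by (rule measurable_from_subalg[OF subalg[OF emeas levmeas] rej_meas_filt[OF emeas levmeas]])
    subgoal by (rule emeas[OF that])
    subgoal by (rule dec_meas[OF emeas levmeas that])
    done
  have hmeas: "(\<lambda>x. ennreal (h j x)) \<in> borel_measurable M" if "j \<ge> 1" for j
  proof -
    show ?thesis unfolding h_def by (rule meas_enn[OF meas_ratio[OF LM(1)[OF that] LM(3)[OF that]]])
  qed
  have tmeas: "(\<lambda>x. ennreal (tm j x)) \<in> borel_measurable M" if "j \<ge> 1" for j
  proof -
    show ?thesis unfolding tm_def
      by (rule meas_enn[OF meas_tm[OF LM(1)[OF that] LM(3)[OF that] LM(4)[OF that] LM(2)[OF that]]])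
  qed
  have dmeas: "(\<lambda>x. ennreal (decision e lev j x / (rejections e lev (j - 1) x + 1))) \<in> borel_measurable M"
    if "j \<ge> 1" for j
  proof -
    show ?thesis by (rule meas_enn[OF meas_ratio[OF LM(5)[OF that] LM(3)[OF that]]])
  qed
  have nfin: "finite (nulls \<theta> t)" for t unfolding nulls_def by simp
  have n1: "j \<ge> 1" if "j \<in> nulls \<theta> t" for j t using that unfolding nulls_def by simp
  have null0: "\<theta> j = 0" if "j \<in> nulls \<theta> t" for j t using that unfolding nulls_def by simp
  have star: "(\<integral>\<^sup>+ x. ennreal (FDP_star \<theta> e lev t x) \<partial>M) = (\<Sum>j\<in>nulls \<theta> t. \<integral>\<^sup>+ x. ennreal (h j x) \<partial>M)" for t
  proof -
    have "(\<integral>\<^sup>+ x. ennreal (FDP_star \<theta> e lev t x) \<partial>M) = (\<integral>\<^sup>+ x. (\<Sum>j\<in>nulls \<theta> t. ennreal (h j x)) \<partial>M)"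
    proof (rule nn_integral_cong)
      fix x assume x: "x \<in> space M"
      have "(\<Sum>j\<in>nulls \<theta> t. ennreal (h j x)) = ennreal (\<Sum>j\<in>nulls \<theta> t. h j x)"
        by (rule sum_ennreal) (use hnn n1 x in auto)
      then show "ennreal (FDP_star \<theta> e lev t x) = (\<Sum>j\<in>nulls \<theta> t. ennreal (h j x))"
        by (simp add: FDP_star_def h_def)
    qed
    also have "\<dots> = (\<Sum>j\<in>nulls \<theta> t. \<integral>\<^sup>+ x. ennreal (h j x) \<partial>M)"
      by (rule nn_integral_sum) (use hmeas n1 in auto)
    finally show ?thesis .
  qed
  have partA: "(\<integral>\<^sup>+ x. ennreal (FDP_star \<theta> e lev t x) \<partial>M) \<le> (\<integral>\<^sup>+ x. ennreal (FDP_hat_saffron e lev lam t x) \<partial>M)" for t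
  proof -
    have "(\<integral>\<^sup>+ x. ennreal (FDP_star \<theta> e lev t x) \<partial>M) \<le> (\<Sum>j\<in>nulls \<theta> t. \<integral>\<^sup>+ x. ennreal (tm j x) \<partial>M)"
      unfolding star
    proof (rule sum_mono)
      fix j assume j: "j \<in> nulls \<theta> t"
      show "(\<integral>\<^sup>+ x. ennreal (h j x) \<partial>M) \<le> (\<integral>\<^sup>+ x. ennreal (tm j x) \<partial>M)"
        unfolding h_def tm_def
        by (rule boundB[OF P emeas epos levmeas levpos lammeas lampos n1[OF j] valid[OF n1[OF j] null0[OF j]]])
    qed
    also have "\<dots> = (\<integral>\<^sup>+ x. (\<Sum>j\<in>nulls \<theta> t. ennreal (tm j x)) \<partial>M)"
      by (rule nn_integral_sum[symmetric]) (use tmeas n1 in auto)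
    also have "\<dots> \<le> (\<integral>\<^sup>+ x. (\<Sum>j\<in>{1..t}. ennreal (tm j x)) \<partial>M)"
      by (rule nn_integral_mono, rule sum_mono2) (auto simp: nulls_def)
    also have "\<dots> = (\<integral>\<^sup>+ x. ennreal (FDP_hat_saffron e lev lam t x) \<partial>M)"
    proof (rule nn_integral_cong)
      fix x assume x: "x \<in> space M"
      have "(\<Sum>j\<in>{1..t}. ennreal (tm j x)) = ennreal (\<Sum>j\<in>{1..t}. tm j x)"
        by (rule sum_ennreal) (use tnn x in auto)
      then show "(\<Sum>j\<in>{1..t}. ennreal (tm j x)) = ennreal (FDP_hat_saffron e lev lam t x)"
        by (simp add: FDP_hat_saffron_def tm_def)
    qed
    finally show ?thesis .
  qed
  have partB: "FDR M \<theta> e lev t \<le> alpha" if t1: "t \<ge> 1" and H: "AE x in M. FDP_hat_saffron e lev lam t x \<le> alpha" for t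
  proof -
    have FDPmeas: "FDP \<theta> e lev t \<in> borel_measurable M"
    proof -
      have m1: "(\<lambda>x. \<Sum>j\<in>nulls \<theta> t. decision e lev j x) \<in> borel_measurable M"
        by (rule borel_measurable_sum, rule LM(5), rule n1)
      have m2: "rejections e lev t \<in> borel_measurable M"
        unfolding rejections_def[abs_def] by (rule borel_measurable_sum, rule LM(5)) simp
      show ?thesis unfolding FDP_def[abs_def] by (rule meas_fdp[OF m1 m2])
    qed
    have FDPnn: "0 \<le> FDP \<theta> e lev t x" for x
      unfolding FDP_def by (intro divide_nonneg_nonneg sum_nonneg dec_nonneg) auto
    have FDP1: "FDP \<theta> e lev t x \<le> 1" for x
    proof -
      have "(\<Sum>j\<in>nulls \<theta> t. decision e lev j x) \<le> rejections e lev t x"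
        unfolding rejections_def by (rule sum_mono2) (auto simp: nulls_def dec_nonneg)
      then have "(\<Sum>j\<in>nulls \<theta> t. decision e lev j x) \<le> max (rejections e lev t x) 1"
        by (simp add: le_max_iff_disj)
      moreover have "0 < max (rejections e lev t x) 1" by simp
      ultimately show ?thesis unfolding FDP_def by (simp add: divide_le_eq_1)
    qed
    have int: "integrable M (FDP \<theta> e lev t)"
      by (rule integrable_const_bound[where B=1]) (use FDPnn FDP1 FDPmeas in auto)
    have "ennreal (FDR M \<theta> e lev t) = (\<integral>\<^sup>+ x. ennreal (FDP \<theta> e lev t x) \<partial>M)"
      unfolding FDR_def by (rule nn_integral_eq_integral[symmetric]) (use int FDPnn in auto)
    also have "\<dots> \<le> (\<integral>\<^sup>+ x. (\<Sum>j\<in>nulls \<theta> t. ennreal (decision e lev j x / (rejections e lev (j - 1) x + 1))) \<partial>M)"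
    proof (rule nn_integral_mono)
      fix x
      show "ennreal (FDP \<theta> e lev t x) \<le> (\<Sum>j\<in>nulls \<theta> t. ennreal (decision e lev j x / (rejections e lev (j - 1) x + 1)))"
      proof -
        have eq: "(\<Sum>j\<in>nulls \<theta> t. ennreal (decision e lev j x / (rejections e lev (j - 1) x + 1)))
          = ennreal (\<Sum>j\<in>nulls \<theta> t. decision e lev j x / (rejections e lev (j - 1) x + 1))"
          by (rule sum_ennreal) (intro divide_nonneg_nonneg dec_nonneg add_nonneg_nonneg rej_nonneg zero_le_one)
        show ?thesis unfolding eq by (rule ennreal_leI[OF FDP_le])
      qed
    qed
    also have "\<dots> = (\<Sum>j\<in>nulls \<theta> t. \<integral>\<^sup>+ x. ennreal (decision e lev j x / (rejections e lev (j - 1) x + 1)) \<partial>M)"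
      by (rule nn_integral_sum) (use dmeas n1 in auto)
    also have "\<dots> \<le> (\<Sum>j\<in>nulls \<theta> t. \<integral>\<^sup>+ x. ennreal (h j x) \<partial>M)"
    proof (rule sum_mono)
      fix j assume j: "j \<in> nulls \<theta> t"
      show "(\<integral>\<^sup>+ x. ennreal (decision e lev j x / (rejections e lev (j - 1) x + 1)) \<partial>M) \<le> (\<integral>\<^sup>+ x. ennreal (h j x) \<partial>M)"
        unfolding h_def
        by (rule boundA[OF P emeas epos levmeas levpos lammeas lampos n1[OF j] valid[OF n1[OF j] null0[OF j]]])
    qed
    also have "\<dots> = (\<integral>\<^sup>+ x. ennreal (FDP_star \<theta> e lev t x) \<partial>M)" by (rule star[symmetric])
    also have "\<dots> \<le> (\<integral>\<^sup>+ x. ennreal (FDP_hat_saffron e lev lam t x) \<partial>M)" by (rule partA)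
    also have "\<dots> \<le> (\<integral>\<^sup>+ x. ennreal alpha \<partial>M)"
      by (rule nn_integral_mono_AE) (rule eventually_mono[OF H], erule ennreal_leI)
    also have "\<dots> = ennreal alpha" by (simp add: emeasure_space_1)
    finally show ?thesis using assms(2) by (simp add: ennreal_le_iff)
  qed
  show ?thesis using partA partB by auto
qed

end
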